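(* (i) For every $k\ge2$, $\alpha\in(0,1)\cup(1,2)$ and $p\in(0,1)$ there exists $C_{1,k}^{\alpha,p}>0$ such that for all $n\in\mathbb{N}$ and $t\in\mathbb{R}$, $|R^{\alpha,p}_{n,1,k}(t)|\le C^{\alpha,p}_{1,k}|t|^k/n^{(k-\alpha)/\alpha}$. (ii) For every $\alpha\in(0,1)\cup(1,2)$ and $p\in(0,1)$ there exist $C_2^{\alpha,p}>0$ and $C_3^{\alpha,p}>0$ such that for all $n\in\mathbb{N}$ and $|t|\le C_2^{\alpha,p}n^{1/\alpha}$: $|x_n^{\alpha,p}(t)|/n\le\frac12$, and $|x_n^{\alpha,p}(t)|\le C_3^{\alpha,p}|t|^\alpha$ if $0<\alpha<1$, while $|x_n^{\alpha,p}(t)|\le C_3^{\alpha,p}|t|\,n^{(\alpha-1)/\alpha}$ if $1<\alpha<2$.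
   Context: Let $p\in(0,1)$, $q=1-p$, $r=1/q$, $\alpha>0$, and $\mathbf{f}_{\alpha,p}(t)=\sum_{k\ge1}e^{\mathrm{i}tr^{k/\alpha}}q^{k-1}p$ (the characteristic function of $X$ with $\mathsf{P}\{X=r^{k/\alpha}\}=q^{k-1}p$). Define $x_n^{\alpha,p}(t)=n(\mathbf{f}_{\alpha,p}(t/n^{1/\alpha})-1)$. Let $\gamma_n=n/r^{\lceil\log_r n\rceil}\in(q,1]$ and, for $k\ge2$, \[R^{\alpha,p}_{n,1,k}(t)=-\sum_{m=\lceil\log_rn\rceil}^\infty\Big(\exp\Big\{\frac{\mathrm{i}t}{r^{m/\alpha}\gamma_n^{1/\alpha}}\Big\}-\sum_{j=0}^{k-1}\frac{(\mathrm{i}t)^j}{j!\,r^{jm/\alpha}\gamma_n^{j/\alpha}}\Big)\frac{p\gamma_n}{q}r^m,\quad t\in\mathbb{R}.\] *)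

theory Defs
  imports Complex_Main
begin

definition rr :: "real \<Rightarrow> real" where
  "rr p = 1 / (1 - p)"

text \<open>Characteristic function of X with P{X = r^(k/alpha)} = q^(k-1) p, k >= 1
  (summation index shifted: k = Suc j).\<close>
definition chf :: "real \<Rightarrow> real \<Rightarrow> real \<Rightarrow> complex" where
  "chf \<alpha> p t = (\<Sum>j. exp (\<i> * complex_of_real (t * rr p powr (real (Suc j) / \<alpha>)))
                       * complex_of_real ((1 - p) ^ j * p))"

definition xn :: "real \<Rightarrow> real \<Rightarrow> nat \<Rightarrow> real \<Rightarrow> complex" where
  "xn \<alpha> p n t = of_nat n * (chf \<alpha> p (t / real n powr (1 / \<alpha>)) - 1)"

definition Mn :: "real \<Rightarrow> nat \<Rightarrow> nat" where
  "Mn p n = nat \<lceil>log (rr p) (real n)\<rceil>"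

definition gamma_n :: "real \<Rightarrow> nat \<Rightarrow> real" where
  "gamma_n p n = real n / rr p ^ Mn p n"

definition R1 :: "real \<Rightarrow> real \<Rightarrow> nat \<Rightarrow> nat \<Rightarrow> real \<Rightarrow> complex" where
  "R1 \<alpha> p n k t = - (\<Sum>i. let m = Mn p n + i; r = rr p; g = gamma_n p n in
      (exp (\<i> * complex_of_real (t / (r powr (real m / \<alpha>) * g powr (1 / \<alpha>))))
       - (\<Sum>j<k. (\<i> * complex_of_real t) ^ j /
            complex_of_real (fact j * r powr (real j * real m / \<alpha>) * g powr (real j / \<alpha>))))
      * complex_of_real (p * g / (1 - p) * r ^ m))"

end

theory Submission
  imports Defs "HOL-Probability.Characteristic_Functions"
begin

lemma rr_gt1: "0 < p \<Longrightarrow> p < 1 \<Longrightarrow> rr p > 1"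
  unfolding rr_def by (simp add: field_simps)

lemma powr_mult_nat: "0 < (x::real) \<Longrightarrow> x powr (real j * c) = (x powr c) ^ j"
  by (simp add: powr_powr[symmetric] powr_realpow mult.commute)

lemma gamma_facts:
  assumes "0 < p" "p < 1" "n \<ge> 1"
  shows "gamma_n p n > 0" "rr p ^ Mn p n * gamma_n p n = real n"
proof -
  have r: "rr p > 1" using rr_gt1 assms by auto
  show "gamma_n p n > 0" using r assms unfolding gamma_n_def by simp
  show "rr p ^ Mn p n * gamma_n p n = real n" using r unfolding gamma_n_def by simp
qed

lemma taylor_eq:
  assumes "A > 0"
  shows "(\<Sum>j<k. (\<i> * complex_of_real t) ^ j / complex_of_real (fact j * A ^ j))
     = (\<Sum>j<k. (\<i> * complex_of_real (t / A)) ^ j / fact j)"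
proof (rule sum.cong[OF refl])
  fix j assume "j \<in> {..<k}"
  show "(\<i> * complex_of_real t) ^ j / complex_of_real (fact j * A ^ j) = (\<i> * complex_of_real (t / A)) ^ j / fact j"
    using assms by (simp add: power_mult_distrib power_divide field_simps)
qed


lemma part1:
  fixes k :: nat and \<alpha> p :: real and n :: nat and t :: real
  assumes k: "k \<ge> 2" and a: "0 < \<alpha>" "\<alpha> < 2" and p: "0 < p" "p < 1" and n: "n \<ge> 1"
  shows "cmod (R1 \<alpha> p n k t) \<le> (p / ((1 - p) * fact k * (1 - rr p powr (1 - real k / \<alpha>))))
           * \<bar>t\<bar> ^ k / real n powr ((real k - \<alpha>) / \<alpha>)"
proof -
  define r where "r = rr p"
  define g where "g = gamma_n p n"
  define M where "M = Mn p n"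
  define e where "e = 1 - real k / \<alpha>"
  define \<beta> where "\<beta> = r powr e"
  define K where "K = p / ((1 - p) * fact k)"
  have r1: "r > 1" using rr_gt1 p r_def by auto
  have g0: "g > 0" using gamma_facts(1)[OF p n] g_def by auto
  have rg: "r ^ M * g = real n" using gamma_facts(2)[OF p n] r_def g_def M_def by auto
  have e0: "e < 0" using k a unfolding e_def by (simp add: field_simps)
  have b0: "0 < \<beta>" "\<beta> < 1" using r1 e0 unfolding \<beta>_def by (auto intro: powr_less_one)
  have K0: "K > 0" using p unfolding K_def by simp
  obtain k' where kk: "k = Suc k'" using k by (cases k) auto
  define f where "f i = (let m = M + i; r = rr p; g = gamma_n p n in
      (exp (\<i> * complex_of_real (t / (r powr (real m / \<alpha>) * g powr (1 / \<alpha>))))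
       - (\<Sum>j<k. (\<i> * complex_of_real t) ^ j /
            complex_of_real (fact j * r powr (real j * real m / \<alpha>) * g powr (real j / \<alpha>))))
      * complex_of_real (p * g / (1 - p) * r ^ m))" for i
  have R: "R1 \<alpha> p n k t = - suminf f" unfolding R1_def f_def M_def by simp
  have bnd: "cmod (f i) \<le> K * \<bar>t\<bar> ^ k * real n powr e * \<beta> ^ i" for i
  proof -
    define m where "m = M + i"
    define A where "A = r powr (real m / \<alpha>) * g powr (1 / \<alpha>)"
    have A0: "A > 0" using r1 g0 unfolding A_def by simp
    have Aj: "fact j * r powr (real j * real m / \<alpha>) * g powr (real j / \<alpha>) = fact j * A ^ j" for j
    proof -
      have "r powr (real j * real m / \<alpha>) = (r powr (real m / \<alpha>)) ^ j"
        using powr_mult_nat[of r j "real m / \<alpha>"] r1 by simp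
      moreover have "g powr (real j / \<alpha>) = (g powr (1 / \<alpha>)) ^ j"
        using powr_mult_nat[of g j "1 / \<alpha>"] g0 by simp
      ultimately show ?thesis unfolding A_def by (simp add: power_mult_distrib)
    qed
    have fi: "f i = (iexp (t / A) - (\<Sum>j\<le>k'. (\<i> * complex_of_real (t / A)) ^ j / fact j))
              * complex_of_real (p * g / (1 - p) * r ^ m)"
      unfolding f_def Let_def r_def[symmetric] g_def[symmetric] m_def[symmetric] A_def[symmetric] Aj
      using taylor_eq[OF A0, where k=k and t=t] kk by (simp add: lessThan_Suc_atMost)
    have pos: "p * g / (1 - p) * r ^ m \<ge> 0" using p g0 r1 by simp
    have "cmod (f i) \<le> \<bar>t / A\<bar> ^ k / fact k * (p * g / (1 - p) * r ^ m)"
      unfolding fi norm_mult norm_of_real abs_of_nonneg[OF pos] kk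
      by (rule mult_right_mono[OF iexp_approx1 pos])
    also have "\<dots> = K * \<bar>t\<bar> ^ k * (g * r ^ m / A ^ k)"
      unfolding K_def using A0 by (simp add: power_divide abs_divide field_simps)
    also have "g * r ^ m / A ^ k = real n powr e * \<beta> ^ i"
    proof -
      have Ak: "A ^ k = r powr (real k * (real m / \<alpha>)) * g powr (real k * (1 / \<alpha>))"
        unfolding A_def power_mult_distrib using powr_mult_nat[of r k "real m / \<alpha>"] powr_mult_nat[of g k "1 / \<alpha>"] r1 g0 by simp
      have "g * r ^ m / A ^ k = (g powr 1 / g powr (real k * (1 / \<alpha>))) * (r powr (real m) / r powr (real k * (real m / \<alpha>)))"
        unfolding Ak using g0 r1 by (simp add: powr_realpow)
      also have "\<dots> = g powr e * r powr (real m * e)"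
        unfolding e_def using g0 r1 powr_diff[of g 1 "real k / \<alpha>"] by (simp add: powr_diff[symmetric] algebra_simps)
      also have "r powr (real m * e) = r powr (real M * e) * \<beta> ^ i"
        unfolding m_def \<beta>_def using r1 by (simp add: distrib_right powr_add powr_mult_nat)
      also have "r powr (real M * e) = (r ^ M) powr e"
        using r1 by (simp add: powr_powr[symmetric] powr_realpow)
      finally have "g * r ^ m / A ^ k = (r ^ M * g) powr e * \<beta> ^ i"
        using g0 r1 by (simp add: powr_mult)
      then show ?thesis using rg by simp
    qed
    finally show ?thesis by (simp add: mult.assoc)
  qed
  have sb: "summable (\<lambda>i. K * \<bar>t\<bar> ^ k * real n powr e * \<beta> ^ i)"
    using b0 by (intro summable_mult summable_geometric) simp
  have "cmod (R1 \<alpha> p n k t) \<le> (\<Sum>i. K * \<bar>t\<bar> ^ k * real n powr e * \<beta> ^ i)"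
    unfolding R norm_minus_cancel by (rule norm_suminf_le[OF bnd sb])
  also have "\<dots> = K * \<bar>t\<bar> ^ k * real n powr e / (1 - \<beta>)"
    using b0 by (simp add: suminf_mult suminf_geometric divide_simps)
  also have "real n powr e = 1 / real n powr ((real k - \<alpha>) / \<alpha>)"
    unfolding e_def using a n by (simp add: powr_minus_divide[symmetric] diff_divide_distrib)
  finally show ?thesis unfolding K_def \<beta>_def r_def e_def by (simp add: field_simps)
qed


lemma iexp_sub1: "cmod (iexp x - 1) \<le> \<bar>x\<bar>"
  using iexp_approx1[of x 0] by simp

lemma iexp_sub2: "cmod (iexp x - 1) \<le> 2"
proof -
  have "cmod (iexp x - 1) \<le> cmod (iexp x) + cmod 1" by (rule norm_triangle_ineq4)
  also have "cmod (iexp x) = 1" by (simp add: norm_exp_i_times)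
  finally show ?thesis by simp
qed

lemma chf_bound:
  assumes p: "0 < p" "p < 1"
    and b: "\<And>j. cmod (iexp (s * rr p powr (real (Suc j) / \<alpha>)) - 1) * ((1 - p) ^ j * p) \<le> b j"
    and sb: "summable b"
  shows "cmod (chf \<alpha> p s - 1) \<le> suminf b"
proof -
  define c where "c j = iexp (s * rr p powr (real (Suc j) / \<alpha>)) * complex_of_real ((1 - p) ^ j * p)" for j
  define d where "d j = complex_of_real ((1 - p) ^ j * p)" for j
  have q: "0 \<le> 1 - p" "1 - p < 1" using p by auto
  have nc: "norm (c j) = (1 - p) ^ j * p" for j
    unfolding c_def norm_mult norm_of_real using p by (simp add: norm_exp_i_times)
  have sq: "summable (\<lambda>j. (1 - p) ^ j * p)"
    using q by (intro summable_mult2 summable_geometric) auto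
  have scn: "summable (\<lambda>j. norm (c j))" unfolding nc by (rule sq)
  have sc: "summable c" by (rule summable_norm_cancel[OF scn])
  have sd: "summable d" unfolding d_def using sq by (rule summable_of_real)
  have "(\<Sum>j. (1 - p) ^ j * p) = 1"
    using q p by (simp add: suminf_mult2[symmetric] suminf_geometric)
  moreover have "suminf d = complex_of_real (\<Sum>j. (1 - p) ^ j * p)"
    unfolding d_def by (rule suminf_of_real[OF sq, symmetric])
  ultimately have d1: "suminf d = 1" by simp
  have "chf \<alpha> p s - 1 = suminf c - suminf d" unfolding chf_def c_def d1 by simp
  also have "\<dots> = (\<Sum>j. c j - d j)" by (rule suminf_diff[OF sc sd])
  finally have e: "chf \<alpha> p s - 1 = (\<Sum>j. c j - d j)" .
  have "norm (c j - d j) \<le> b j" for j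
  proof -
    have "c j - d j = (iexp (s * rr p powr (real (Suc j) / \<alpha>)) - 1) * complex_of_real ((1 - p) ^ j * p)"
      unfolding c_def d_def by (simp add: algebra_simps)
    then have "norm (c j - d j) = cmod (iexp (s * rr p powr (real (Suc j) / \<alpha>)) - 1) * ((1 - p) ^ j * p)"
      using p by (simp only: norm_mult norm_of_real) simp
    then show ?thesis using b[of j] by simp
  qed
  then show ?thesis unfolding e by (rule norm_suminf_le[OF _ sb])
qed


lemma rpow_suc: "1 < r \<Longrightarrow> r powr (real (Suc j) / \<alpha>) = (r powr (1 / \<alpha>)) ^ Suc j"
  using powr_mult_nat[of r "Suc j" "1 / \<alpha>"] by simp

lemma big_alpha:
  assumes p: "0 < p" "p < 1" and a: "1 < \<alpha>"
  shows "cmod (chf \<alpha> p s - 1) \<le> (rr p powr (1 / \<alpha>) * p / (1 - rr p powr (1 / \<alpha> - 1))) * \<bar>s\<bar>"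
proof -
  define r where "r = rr p"
  define \<sigma> where "\<sigma> = r powr (1 / \<alpha>)"
  define \<rho> where "\<rho> = r powr (1 / \<alpha> - 1)"
  have r1: "r > 1" using rr_gt1 p r_def by auto
  have q: "1 - p = 1 / r" unfolding r_def rr_def using p by simp
  have \<rho>: "\<rho> = \<sigma> * (1 - p)" unfolding \<rho>_def \<sigma>_def q using r1 by (simp add: powr_diff)
  have \<rho>0: "0 < \<rho>" "\<rho> < 1" unfolding \<rho>_def using r1 a by (auto intro: powr_less_one)
  have "cmod (chf \<alpha> p s - 1) \<le> (\<Sum>j. (\<bar>s\<bar> * \<sigma> * p) * \<rho> ^ j)"
  proof (rule chf_bound[OF p])
    fix j
    have "cmod (iexp (s * rr p powr (real (Suc j) / \<alpha>)) - 1) * ((1 - p) ^ j * p)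
          \<le> \<bar>s * rr p powr (real (Suc j) / \<alpha>)\<bar> * ((1 - p) ^ j * p)"
      using p by (intro mult_right_mono iexp_sub1) auto
    also have "\<dots> = (\<bar>s\<bar> * \<sigma> * p) * \<rho> ^ j"
      unfolding \<rho> r_def[symmetric] rpow_suc[OF r1] \<sigma>_def[symmetric] using r1
      by (simp add: abs_mult power_mult_distrib \<sigma>_def)
    finally show "cmod (iexp (s * rr p powr (real (Suc j) / \<alpha>)) - 1) * ((1 - p) ^ j * p) \<le> (\<bar>s\<bar> * \<sigma> * p) * \<rho> ^ j" .
    show "summable (\<lambda>j. (\<bar>s\<bar> * \<sigma> * p) * \<rho> ^ j)" using \<rho>0 by (intro summable_mult summable_geometric) simp
  qed
  also have "\<dots> = (\<sigma> * p / (1 - \<rho>)) * \<bar>s\<bar>" using \<rho>0 by (simp add: suminf_mult suminf_geometric)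
  finally show ?thesis unfolding \<sigma>_def \<rho>_def r_def .
qed

lemma geo_sum_le: "1 < (\<rho>::real) \<Longrightarrow> (\<Sum>j<J. \<rho> ^ j) \<le> \<rho> ^ J / (\<rho> - 1)"
proof (induction J)
  case 0 then show ?case by simp
next
  case (Suc J)
  have "(\<Sum>j<Suc J. \<rho> ^ j) \<le> \<rho> ^ J / (\<rho> - 1) + \<rho> ^ J" using Suc by simp
  also have "\<dots> = \<rho> ^ Suc J / (\<rho> - 1)" using Suc.prems by (simp add: field_simps)
  finally show ?case .
qed


lemma small_alpha:
  assumes p: "0 < p" "p < 1" and a: "0 < \<alpha>" "\<alpha> < 1" and s: "\<bar>s\<bar> \<le> 1"
  shows "cmod (chf \<alpha> p s - 1) \<le> ((rr p powr (1 / \<alpha>) * p / (rr p powr (1 / \<alpha> - 1) - 1) + 2) * rr p) * \<bar>s\<bar> powr \<alpha>"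
proof -
  define r where "r = rr p"
  define \<sigma> where "\<sigma> = r powr (1 / \<alpha>)"
  define \<rho> where "\<rho> = r powr (1 / \<alpha> - 1)"
  have r1: "r > 1" using rr_gt1 p r_def by auto
  have q: "1 - p = 1 / r" unfolding r_def rr_def using p by simp
  have \<rho>: "\<rho> = \<sigma> * (1 - p)" unfolding \<rho>_def \<sigma>_def q using r1 by (simp add: powr_diff)
  have \<rho>1: "1 < \<rho>" unfolding \<rho>_def using r1 a by simp
  have \<sigma>1: "1 < \<sigma>" unfolding \<sigma>_def using r1 a by simp
  have term_eq: "rr p powr (real (Suc j) / \<alpha>) = \<sigma> ^ Suc j" for j
    unfolding r_def[symmetric] rpow_suc[OF r1] \<sigma>_def ..
  show ?thesis
  proof (cases "s = 0")
    case True
    have "cmod (chf \<alpha> p s - 1) \<le> (\<Sum>j. 0::real)"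
      by (rule chf_bound[OF p]) (use True in auto)
    then show ?thesis using True by simp
  next
    case False
    define x where "x = \<bar>s\<bar>"
    have x0: "0 < x" "x \<le> 1" using False s x_def by auto
    define L where "L = log \<sigma> (1 / x)"
    have L0: "L \<ge> 0" unfolding L_def using x0 \<sigma>1 by simp
    define J where "J = nat \<lfloor>L\<rfloor>"
    have JL: "real J \<le> L" "L < real J + 1" unfolding J_def using L0 by linarith+
    have "\<sigma> ^ J = \<sigma> powr real J" using \<sigma>1 by (simp add: powr_realpow)
    also have "\<dots> \<le> \<sigma> powr L" using \<sigma>1 JL by simp
    also have "\<dots> = 1 / x" unfolding L_def using \<sigma>1 x0 by simp
    finally have sJ: "x * \<sigma> ^ J \<le> 1" using x0 by (simp add: field_simps)
    have "1 / x = \<sigma> powr L" unfolding L_def using \<sigma>1 x0 by simp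
    also have "\<dots> < \<sigma> powr (real J + 1)" using \<sigma>1 JL by simp
    also have "\<dots> = \<sigma> ^ Suc J" using \<sigma>1 powr_realpow[of \<sigma> "Suc J"] by (simp add: add.commute)
    finally have sJ1: "1 < x * \<sigma> ^ Suc J" using x0 by (simp add: field_simps)
    have "1 < (x * \<sigma> ^ Suc J) powr \<alpha>" using sJ1 a by simp
    also have "\<dots> = x powr \<alpha> * r ^ Suc J"
    proof -
      have "(\<sigma> ^ Suc J) powr \<alpha> = ((r powr (1 / \<alpha>)) powr real (Suc J)) powr \<alpha>"
        unfolding \<sigma>_def using r1 by (simp only: powr_realpow powr_gt_zero)
      also have "\<dots> = r powr (1 / \<alpha> * real (Suc J) * \<alpha>)" by (simp only: powr_powr)
      also have "\<dots> = r powr real (Suc J)" using a by simp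
      also have "\<dots> = r ^ Suc J" using r1 by (simp only: powr_realpow)
      finally have "(\<sigma> ^ Suc J) powr \<alpha> = r ^ Suc J" .
      then show ?thesis using x0 \<sigma>1 by (simp add: powr_mult)
    qed
    finally have qJ: "(1 - p) ^ J \<le> r * x powr \<alpha>" unfolding q using r1
      by (simp add: field_simps power_one_over)
    define b where "b j = (if j < J then x * \<sigma> ^ Suc j * ((1 - p) ^ j * p) else 2 * ((1 - p) ^ j * p))" for j
    have shift: "(\<lambda>i. b (i + J)) sums (2 * (1 - p) ^ J)"
    proof -
      have "(\<lambda>i. (2 * (1 - p) ^ J * p) * (1 - p) ^ i) sums ((2 * (1 - p) ^ J * p) * (1 / (1 - (1 - p))))"
        using p by (intro sums_mult geometric_sums) auto
      moreover have "(\<lambda>i. b (i + J)) = (\<lambda>i. (2 * (1 - p) ^ J * p) * (1 - p) ^ i)"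
        unfolding b_def by (auto simp: power_add)
      ultimately show ?thesis using p by simp
    qed
    have bs: "b sums (2 * (1 - p) ^ J + (\<Sum>i<J. b i))" using shift by (simp add: sums_iff_shift)
    have "cmod (chf \<alpha> p s - 1) \<le> suminf b"
    proof (rule chf_bound[OF p])
      fix j
      show "cmod (iexp (s * rr p powr (real (Suc j) / \<alpha>)) - 1) * ((1 - p) ^ j * p) \<le> b j"
      proof (cases "j < J")
        case True
        have "cmod (iexp (s * rr p powr (real (Suc j) / \<alpha>)) - 1) * ((1 - p) ^ j * p)
              \<le> \<bar>s * rr p powr (real (Suc j) / \<alpha>)\<bar> * ((1 - p) ^ j * p)"
          using p by (intro mult_right_mono iexp_sub1) auto
        also have "\<dots> = b j" unfolding b_def term_eq x_def using True \<sigma>1 by (simp add: abs_mult)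
        finally show ?thesis .
      next
        case False
        have "cmod (iexp (s * rr p powr (real (Suc j) / \<alpha>)) - 1) * ((1 - p) ^ j * p)
              \<le> 2 * ((1 - p) ^ j * p)"
          using p by (intro mult_right_mono iexp_sub2) auto
        then show ?thesis unfolding b_def using False by simp
      qed
    next
      show "summable b" using bs by (rule sums_summable)
    qed
    also have "suminf b = 2 * (1 - p) ^ J + (\<Sum>i<J. b i)" using bs by (rule sums_unique[symmetric])
    also have "(\<Sum>i<J. b i) = x * \<sigma> * p * (\<Sum>i<J. \<rho> ^ i)"
      unfolding b_def \<rho> power_mult_distrib by (simp add: sum_distrib_left mult_ac)
    also have "\<dots> \<le> x * \<sigma> * p * (\<rho> ^ J / (\<rho> - 1))"
      using geo_sum_le[OF \<rho>1] x0 \<sigma>1 p by (intro mult_left_mono) auto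
    also have "\<dots> = \<sigma> * p / (\<rho> - 1) * (x * \<sigma> ^ J) * (1 - p) ^ J"
      unfolding \<rho> power_mult_distrib by (simp add: mult_ac)
    also have "\<dots> \<le> \<sigma> * p / (\<rho> - 1) * 1 * (1 - p) ^ J"
      using sJ \<rho>1 \<sigma>1 p by (intro mult_right_mono mult_left_mono) auto
    finally have "cmod (chf \<alpha> p s - 1) \<le> (\<sigma> * p / (\<rho> - 1) + 2) * (1 - p) ^ J" by (simp add: algebra_simps)
    also have "\<dots> \<le> (\<sigma> * p / (\<rho> - 1) + 2) * (r * x powr \<alpha>)"
      using qJ \<rho>1 \<sigma>1 p by (intro mult_left_mono) auto
    finally show ?thesis unfolding x_def \<sigma>_def \<rho>_def r_def by (simp add: algebra_simps)
  qed
qed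


lemma xn_norm: "n \<ge> 1 \<Longrightarrow> cmod (xn \<alpha> p n t) = real n * cmod (chf \<alpha> p (t / real n powr (1 / \<alpha>)) - 1)"
  unfolding xn_def by (simp add: norm_mult)

lemma part2_small:
  assumes p: "0 < p" "p < 1" and a: "0 < \<alpha>" "\<alpha> < 1"
  shows "\<exists>C2>0. \<exists>C3>0. \<forall>n::nat. \<forall>t::real. n \<ge> 1 \<longrightarrow> \<bar>t\<bar> \<le> C2 * real n powr (1 / \<alpha>) \<longrightarrow>
               cmod (xn \<alpha> p n t) / real n \<le> 1 / 2
               \<and> (\<alpha> < 1 \<longrightarrow> cmod (xn \<alpha> p n t) \<le> C3 * \<bar>t\<bar> powr \<alpha>)
               \<and> (1 < \<alpha> \<longrightarrow> cmod (xn \<alpha> p n t) \<le> C3 * \<bar>t\<bar> * real n powr ((\<alpha> - 1) / \<alpha>))"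
proof -
  define E where "E = (rr p powr (1 / \<alpha>) * p / (rr p powr (1 / \<alpha> - 1) - 1) + 2) * rr p"
  have r1: "rr p > 1" using rr_gt1 p by auto
  have "rr p powr (1 / \<alpha> - 1) > 1" using r1 a by simp
  then have E0: "E > 0" unfolding E_def using p r1 by (simp add: add_pos_nonneg)
  define C2 where "C2 = min 1 ((1 / (2 * E)) powr (1 / \<alpha>))"
  have C20: "C2 > 0" unfolding C2_def using E0 by simp
  have C2a: "C2 powr \<alpha> \<le> 1 / (2 * E)"
  proof -
    have "C2 powr \<alpha> \<le> ((1 / (2 * E)) powr (1 / \<alpha>)) powr \<alpha>"
      unfolding C2_def using C20 a by (intro powr_mono2) (auto simp: C2_def)
    also have "\<dots> = 1 / (2 * E)" using a E0 by (simp add: powr_powr)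
    finally show ?thesis .
  qed
  have main: "cmod (xn \<alpha> p n t) / real n \<le> 1 / 2
               \<and> (\<alpha> < 1 \<longrightarrow> cmod (xn \<alpha> p n t) \<le> E * \<bar>t\<bar> powr \<alpha>)
               \<and> (1 < \<alpha> \<longrightarrow> cmod (xn \<alpha> p n t) \<le> E * \<bar>t\<bar> * real n powr ((\<alpha> - 1) / \<alpha>))"
     if n: "n \<ge> 1" and t: "\<bar>t\<bar> \<le> C2 * real n powr (1 / \<alpha>)" for n :: nat and t :: real
  proof (intro conjI impI)
    define s where "s = t / real n powr (1 / \<alpha>)"
    have np: "real n powr (1 / \<alpha>) > 0" using n by simp
    have sC: "\<bar>s\<bar> \<le> C2" unfolding s_def using t np by (simp add: abs_divide divide_le_eq)
    have s1: "\<bar>s\<bar> \<le> 1" using sC unfolding C2_def by simp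
    have b: "cmod (chf \<alpha> p s - 1) \<le> E * \<bar>s\<bar> powr \<alpha>"
      unfolding E_def using small_alpha[OF p a s1] .
    have "\<bar>s\<bar> powr \<alpha> \<le> C2 powr \<alpha>" using sC a by (intro powr_mono2) auto
    then have "E * \<bar>s\<bar> powr \<alpha> \<le> E * (1 / (2 * E))" using C2a E0 by (intro mult_left_mono) auto
    then have h: "cmod (chf \<alpha> p s - 1) \<le> 1 / 2" using b E0 by simp
    show "cmod (xn \<alpha> p n t) / real n \<le> 1 / 2" using h n unfolding xn_norm[OF n] s_def by simp
    have "\<bar>s\<bar> powr \<alpha> = \<bar>t\<bar> powr \<alpha> / real n"
      unfolding s_def abs_divide using np a n
      by (simp add: powr_divide powr_powr)
    then have ee: "real n * (E * \<bar>s\<bar> powr \<alpha>) = E * \<bar>t\<bar> powr \<alpha>" using n by simp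
    have "real n * cmod (chf \<alpha> p s - 1) \<le> real n * (E * \<bar>s\<bar> powr \<alpha>)" using b by (intro mult_left_mono) auto
    then show "cmod (xn \<alpha> p n t) \<le> E * \<bar>t\<bar> powr \<alpha>" if "\<alpha> < 1"
      unfolding xn_norm[OF n] s_def[symmetric] ee .
    show "cmod (xn \<alpha> p n t) \<le> E * \<bar>t\<bar> * real n powr ((\<alpha> - 1) / \<alpha>)" if "1 < \<alpha>" using a that by simp
  qed
  show ?thesis using main C20 E0 by blast
qed

lemma part2_big:
  assumes p: "0 < p" "p < 1" and a: "1 < \<alpha>"
  shows "\<exists>C2>0. \<exists>C3>0. \<forall>n::nat. \<forall>t::real. n \<ge> 1 \<longrightarrow> \<bar>t\<bar> \<le> C2 * real n powr (1 / \<alpha>) \<longrightarrow>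
               cmod (xn \<alpha> p n t) / real n \<le> 1 / 2
               \<and> (\<alpha> < 1 \<longrightarrow> cmod (xn \<alpha> p n t) \<le> C3 * \<bar>t\<bar> powr \<alpha>)
               \<and> (1 < \<alpha> \<longrightarrow> cmod (xn \<alpha> p n t) \<le> C3 * \<bar>t\<bar> * real n powr ((\<alpha> - 1) / \<alpha>))"
proof -
  define D where "D = rr p powr (1 / \<alpha>) * p / (1 - rr p powr (1 / \<alpha> - 1))"
  have r1: "rr p > 1" using rr_gt1 p by auto
  have "rr p powr (1 / \<alpha> - 1) < 1" using r1 a by (intro powr_less_one) auto
  then have D0: "D > 0" unfolding D_def using p r1 by simp
  define C2 where "C2 = 1 / (2 * D)"
  have C20: "C2 > 0" unfolding C2_def using D0 by simp
  have main: "cmod (xn \<alpha> p n t) / real n \<le> 1 / 2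
               \<and> (\<alpha> < 1 \<longrightarrow> cmod (xn \<alpha> p n t) \<le> D * \<bar>t\<bar> powr \<alpha>)
               \<and> (1 < \<alpha> \<longrightarrow> cmod (xn \<alpha> p n t) \<le> D * \<bar>t\<bar> * real n powr ((\<alpha> - 1) / \<alpha>))"
     if n: "n \<ge> 1" and t: "\<bar>t\<bar> \<le> C2 * real n powr (1 / \<alpha>)" for n :: nat and t :: real
  proof (intro conjI impI)
    define s where "s = t / real n powr (1 / \<alpha>)"
    have np: "real n powr (1 / \<alpha>) > 0" using n by simp
    have sC: "\<bar>s\<bar> \<le> C2" unfolding s_def using t np by (simp add: abs_divide divide_le_eq)
    have b: "cmod (chf \<alpha> p s - 1) \<le> D * \<bar>s\<bar>"
      unfolding D_def using big_alpha[OF p a] .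
    have "D * \<bar>s\<bar> \<le> D * C2" using sC D0 by (intro mult_left_mono) auto
    then have h: "cmod (chf \<alpha> p s - 1) \<le> 1 / 2" using b D0 unfolding C2_def by simp
    show "cmod (xn \<alpha> p n t) / real n \<le> 1 / 2" using h n unfolding xn_norm[OF n] s_def by simp
    show "cmod (xn \<alpha> p n t) \<le> D * \<bar>t\<bar> powr \<alpha>" if "\<alpha> < 1" using a that by simp
    have e: "real n * \<bar>s\<bar> = \<bar>t\<bar> * real n powr ((\<alpha> - 1) / \<alpha>)"
    proof -
      have "real n powr ((\<alpha> - 1) / \<alpha>) = real n / real n powr (1 / \<alpha>)"
        using n a by (simp add: diff_divide_distrib powr_diff)
      then show ?thesis unfolding s_def using np by (simp add: abs_divide field_simps)
    qed
    have "real n * cmod (chf \<alpha> p s - 1) \<le> real n * (D * \<bar>s\<bar>)" using b by (intro mult_left_mono) auto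
    then show "cmod (xn \<alpha> p n t) \<le> D * \<bar>t\<bar> * real n powr ((\<alpha> - 1) / \<alpha>)" if "1 < \<alpha>"
      unfolding xn_norm[OF n] s_def[symmetric] using e by (simp add: mult_ac)
  qed
  show ?thesis using main C20 D0 by blast
qed

theorem lemma3:
  shows "(\<forall>k::nat. \<forall>\<alpha>::real. \<forall>p::real.
            k \<ge> 2 \<longrightarrow> ((0 < \<alpha> \<and> \<alpha> < 1) \<or> (1 < \<alpha> \<and> \<alpha> < 2)) \<longrightarrow> 0 < p \<longrightarrow> p < 1 \<longrightarrow>
            (\<exists>C>0. \<forall>n::nat. \<forall>t::real. n \<ge> 1 \<longrightarrow>
               cmod (R1 \<alpha> p n k t) \<le> C * \<bar>t\<bar> ^ k / real n powr ((real k - \<alpha>) / \<alpha>)))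
       \<and> (\<forall>\<alpha>::real. \<forall>p::real.
            ((0 < \<alpha> \<and> \<alpha> < 1) \<or> (1 < \<alpha> \<and> \<alpha> < 2)) \<longrightarrow> 0 < p \<longrightarrow> p < 1 \<longrightarrow>
            (\<exists>C2>0. \<exists>C3>0. \<forall>n::nat. \<forall>t::real. n \<ge> 1 \<longrightarrow> \<bar>t\<bar> \<le> C2 * real n powr (1 / \<alpha>) \<longrightarrow>
               cmod (xn \<alpha> p n t) / real n \<le> 1 / 2
               \<and> (\<alpha> < 1 \<longrightarrow> cmod (xn \<alpha> p n t) \<le> C3 * \<bar>t\<bar> powr \<alpha>)
               \<and> (1 < \<alpha> \<longrightarrow> cmod (xn \<alpha> p n t) \<le> C3 * \<bar>t\<bar> * real n powr ((\<alpha> - 1) / \<alpha>))))"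
proof (intro conjI allI impI)
  fix k :: nat and \<alpha> p :: real
  assume k: "k \<ge> 2" and a: "(0 < \<alpha> \<and> \<alpha> < 1) \<or> (1 < \<alpha> \<and> \<alpha> < 2)" and p: "0 < p" "p < 1"
  have a': "0 < \<alpha>" "\<alpha> < 2" using a by auto
  define C where "C = p / ((1 - p) * fact k * (1 - rr p powr (1 - real k / \<alpha>)))"
  have r1: "rr p > 1" using rr_gt1 p by auto
  have "1 - real k / \<alpha> < 0" using k a' by (simp add: field_simps)
  then have "rr p powr (1 - real k / \<alpha>) < 1" using r1 by (intro powr_less_one) auto
  then have C0: "C > 0" unfolding C_def using p by simp
  show "\<exists>C>0. \<forall>n::nat. \<forall>t::real. n \<ge> 1 \<longrightarrow>
               cmod (R1 \<alpha> p n k t) \<le> C * \<bar>t\<bar> ^ k / real n powr ((real k - \<alpha>) / \<alpha>)"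
    using part1[OF k a' p] C0 unfolding C_def by blast
next
  fix \<alpha> p :: real
  assume a: "(0 < \<alpha> \<and> \<alpha> < 1) \<or> (1 < \<alpha> \<and> \<alpha> < 2)" and p: "0 < p" "p < 1"
  then show "\<exists>C2>0. \<exists>C3>0. \<forall>n::nat. \<forall>t::real. n \<ge> 1 \<longrightarrow> \<bar>t\<bar> \<le> C2 * real n powr (1 / \<alpha>) \<longrightarrow>
               cmod (xn \<alpha> p n t) / real n \<le> 1 / 2
               \<and> (\<alpha> < 1 \<longrightarrow> cmod (xn \<alpha> p n t) \<le> C3 * \<bar>t\<bar> powr \<alpha>)
               \<and> (1 < \<alpha> \<longrightarrow> cmod (xn \<alpha> p n t) \<le> C3 * \<bar>t\<bar> * real n powr ((\<alpha> - 1) / \<alpha>))"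
    using part2_small[OF p] part2_big[OF p] by blast
qed

end
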